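(* For a real parameter $m$ let $(\#)_m$ denote the equation $f''-\frac{m+1}6E_2f'+\frac{m(m+1)}{12}E_2'f=0$ for holomorphic $f$ on $\mathfrak H$. Let $k$ be a nonnegative integer or half an integer, and let $G_k$ and $G_{k-6}$ be solutions of $(\#)_k$ and $(\#)_{k-6}$ respectively. Then the function $G_{k+6}:=E_6G_k+\Delta G_{k-6}$ is a solution of $(\#)_{k+6}$ if and only if $$[G_k,E_4]=\frac23(k+1)\Delta G_{k-6}.$$
   Context: $\tau\in\mathfrak H$, $q=e^{2\pi i\tau}$, ${}'=\frac1{2\pi i}\frac d{d\tau}$. $E_2=1-24\sum_{n\ge1}\sigma_1(n)q^n$, $E_4=1+240\sum\sigma_3(n)q^n$, $E_6=1-504\sum\sigma_5(n)q^n$, $\Delta=(E_4^3-E_6^2)/1728$. Rankin–Cohen bracket: $[G_k,E_4]=kG_kE_4'-4G_k'E_4$ ($G_k$ regarded as of weight $k$, $E_4$ of weight $4$). *)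

theory Defs
  imports "HOL-Complex_Analysis.Complex_Analysis"
begin

definition UHP :: "complex set" where
  "UHP = {z. Im z > 0}"

definition sigma :: "nat \<Rightarrow> nat \<Rightarrow> nat" where
  "sigma k n = (\<Sum>d\<in>{d. d dvd n}. d ^ k)"

definition qn :: "complex \<Rightarrow> complex" where
  "qn \<tau> = exp (2 * pi * \<i> * \<tau>)"

definition E2 :: "complex \<Rightarrow> complex" where
  "E2 \<tau> = 1 - 24 * (\<Sum>n. of_nat (sigma 1 (Suc n)) * qn \<tau> ^ Suc n)"

definition E4 :: "complex \<Rightarrow> complex" where
  "E4 \<tau> = 1 + 240 * (\<Sum>n. of_nat (sigma 3 (Suc n)) * qn \<tau> ^ Suc n)"

definition E6 :: "complex \<Rightarrow> complex" where
  "E6 \<tau> = 1 - 504 * (\<Sum>n. of_nat (sigma 5 (Suc n)) * qn \<tau> ^ Suc n)"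

definition Delta :: "complex \<Rightarrow> complex" where
  "Delta \<tau> = (E4 \<tau> ^ 3 - E6 \<tau> ^ 2) / 1728"

text \<open>The normalized derivative f' = (1/(2 pi i)) df/d\<tau>.\<close>
definition Dq :: "(complex \<Rightarrow> complex) \<Rightarrow> complex \<Rightarrow> complex" where
  "Dq f \<tau> = deriv f \<tau> / (2 * pi * \<i>)"

definition solves_eq :: "real \<Rightarrow> (complex \<Rightarrow> complex) \<Rightarrow> bool" where
  "solves_eq m f \<longleftrightarrow> f holomorphic_on UHP \<and>
     (\<forall>\<tau>\<in>UHP. Dq (Dq f) \<tau> - of_real ((m + 1) / 6) * E2 \<tau> * Dq f \<tau>
                 + of_real (m * (m + 1) / 12) * Dq E2 \<tau> * f \<tau> = 0)"

text \<open>Rankin--Cohen bracket [G, E4] with G of weight k.\<close>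
definition RC_E4 :: "real \<Rightarrow> (complex \<Rightarrow> complex) \<Rightarrow> complex \<Rightarrow> complex" where
  "RC_E4 k G \<tau> = of_real k * G \<tau> * Dq E4 \<tau> - 4 * Dq G \<tau> * E4 \<tau>"

end

theory Submission
  imports Defs
begin


definition QS :: "nat \<Rightarrow> (nat \<times> nat \<times> nat \<times> nat) set" where
  "QS K = {(m,n,x,y). 0<m \<and> 0<n \<and> 0<x \<and> 0<y \<and> m*x+n*y = K}"

lemma QS_sub: "QS K \<subseteq> {..K} \<times> {..K} \<times> {..K} \<times> {..K}"
proof
  fix p assume "p \<in> QS K"
  then obtain m n x y where p: "p = (m,n,x,y)" "0<m" "0<n" "0<x" "0<y" "m*x+n*y = K"
    by (auto simp: QS_def)
  have "m \<le> m*x" "x \<le> m*x" "n \<le> n*y" "y \<le> n*y" using p by simp_all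
  then have "m \<le> K" "x \<le> K" "n \<le> K" "y \<le> K" using p by linarith+
  then show "p \<in> {..K} \<times> {..K} \<times> {..K} \<times> {..K}" using p by auto
qed

lemma finite_QS [simp]: "finite (QS K)"
  by (rule finite_subset[OF QS_sub]) auto

lemma finite_QS_filter [simp]: "finite {p\<in>QS K. P p}"
  by simp

lemma nat_aux1: "(d::nat) < c \<Longrightarrow> (a+b)*d + a*(c-d) = a*c+b*d"
proof -
  assume "d < c" then obtain e where "c = d+e" using less_imp_add_positive by blast
  then show ?thesis by (simp add: algebra_simps)
qed

lemma nat_aux2: "(b::nat) < a \<Longrightarrow> b*(c+d) + (a-b)*c = a*c+b*d"
proof -
  assume "b < a" then obtain e where "a = b+e" using less_imp_add_positive by blast
  then show ?thesis by (simp add: algebra_simps)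
qed

lemma nat_aux3: "(c::nat) < d \<Longrightarrow> (a+b)*c + b*(d-c) = a*c+b*d"
proof -
  assume "c < d" then obtain e where "d = c+e" using less_imp_add_positive by blast
  then show ?thesis by (simp add: algebra_simps)
qed

lemma nat_aux4: "(b::nat) < a \<Longrightarrow> (a-b)*c + b*(c+d) = a*c+b*d"
proof -
  assume "b < a" then obtain e where "a = b+e" using less_imp_add_positive by blast
  then show ?thesis by (simp add: algebra_simps)
qed

lemma sum_QS_mn:
  fixes \<phi> :: "nat \<Rightarrow> nat \<Rightarrow> real"
  shows "(\<Sum>(m,n,x,y)\<in>QS K. \<phi> m n) =
     (\<Sum>(m,n,x,y)\<in>{p\<in>QS K. fst p = fst (snd p)}. \<phi> m m) +
     (\<Sum>(m,n,x,y)\<in>{p\<in>QS K. fst (snd p) < fst p}. \<phi> m n + \<phi> n m)"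
proof -
  let ?S = "QS K"
  let ?E = "{p\<in>QS K. fst p = fst (snd p)}"
  let ?G = "{p\<in>QS K. fst (snd p) < fst p}"
  let ?L = "{p\<in>QS K. fst p < fst (snd p)}"
  have split: "?S = ?E \<union> (?G \<union> ?L)" by auto
  have "(\<Sum>(m,n,x,y)\<in>?S. \<phi> m n) = (\<Sum>(m,n,x,y)\<in>?E. \<phi> m n) + ((\<Sum>(m,n,x,y)\<in>?G. \<phi> m n) + (\<Sum>(m,n,x,y)\<in>?L. \<phi> m n))"
    apply (subst split)
    apply (subst sum.union_disjoint, simp, simp, force)
    apply (subst sum.union_disjoint, simp, simp, force)
    by simp
  moreover have "(\<Sum>(m,n,x,y)\<in>?E. \<phi> m n) = (\<Sum>(m,n,x,y)\<in>?E. \<phi> m m)"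
    by (rule sum.cong) auto
  moreover have "(\<Sum>(m,n,x,y)\<in>?L. \<phi> m n) = (\<Sum>(m,n,x,y)\<in>?G. \<phi> n m)"
    by (rule sum.reindex_bij_witness[of _ "\<lambda>(m,n,x,y). (n,m,y,x)" "\<lambda>(m,n,x,y). (n,m,y,x)"])
       (auto simp: QS_def)
  ultimately show ?thesis by (simp add: sum.distrib split_def)
qed

lemma sum_QS_xy:
  fixes \<phi> :: "nat \<Rightarrow> nat \<Rightarrow> real"
  shows "(\<Sum>(m,n,x,y)\<in>QS K. \<phi> m n) =
     (\<Sum>(m,n,x,y)\<in>{p\<in>QS K. fst (snd (snd p)) = snd (snd (snd p))}. \<phi> m n) +
     (\<Sum>(m,n,x,y)\<in>{p\<in>QS K. fst (snd p) < fst p}. \<phi> n (m-n) + \<phi> (m-n) n)"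
proof -
  let ?S = "QS K"
  let ?E = "{p\<in>QS K. fst (snd (snd p)) = snd (snd (snd p))}"
  let ?A = "{p\<in>QS K. snd (snd (snd p)) < fst (snd (snd p))}"
  let ?B = "{p\<in>QS K. fst (snd (snd p)) < snd (snd (snd p))}"
  let ?G = "{p\<in>QS K. fst (snd p) < fst p}"
  have split: "?S = ?E \<union> (?A \<union> ?B)" by auto
  have "(\<Sum>(m,n,x,y)\<in>?S. \<phi> m n) = (\<Sum>(m,n,x,y)\<in>?E. \<phi> m n) + ((\<Sum>(m,n,x,y)\<in>?A. \<phi> m n) + (\<Sum>(m,n,x,y)\<in>?B. \<phi> m n))"
    apply (subst split)
    apply (subst sum.union_disjoint, simp, simp, force)
    apply (subst sum.union_disjoint, simp, simp, force)
    by simp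
  moreover have "(\<Sum>(m,n,x,y)\<in>?A. \<phi> m n) = (\<Sum>(m,n,x,y)\<in>?G. \<phi> n (m-n))"
  proof (rule sum.reindex_bij_witness[of _ "\<lambda>(a,b,s,t). (b, a-b, s+t, s)" "\<lambda>(m,n,x,y). (m+n, m, y, x-y)"])
    fix p assume "p \<in> ?A" then show "(\<lambda>(a,b,s,t). (b, a-b, s+t, s)) ((\<lambda>(m,n,x,y). (m+n, m, y, x-y)) p) = p"
      by (auto simp: QS_def)
  next
    fix p assume "p \<in> ?A" then show "(\<lambda>(m,n,x,y). (m+n, m, y, x-y)) p \<in> ?G"
      apply (cases p) apply (auto simp: QS_def)
      by (simp_all add: nat_aux1 nat_aux2 nat_aux3 nat_aux4)
  next
    fix p assume "p \<in> ?G" then show "(\<lambda>(m,n,x,y). (m+n, m, y, x-y)) ((\<lambda>(a,b,s,t). (b, a-b, s+t, s)) p) = p"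
      by (auto simp: QS_def)
  next
    fix p assume "p \<in> ?G" then show "(\<lambda>(a,b,s,t). (b, a-b, s+t, s)) p \<in> ?A"
      apply (cases p) apply (auto simp: QS_def)
      by (simp_all add: nat_aux1 nat_aux2 nat_aux3 nat_aux4)
  next
    fix p assume "p \<in> ?A" then show "(\<lambda>(m,n,x,y). \<phi> n (m - n)) ((\<lambda>(m,n,x,y). (m+n, m, y, x-y)) p) = (\<lambda>(m,n,x,y). \<phi> m n) p"
      by (auto simp: QS_def)
  qed
  moreover have "(\<Sum>(m,n,x,y)\<in>?B. \<phi> m n) = (\<Sum>(m,n,x,y)\<in>?G. \<phi> (m-n) n)"
  proof (rule sum.reindex_bij_witness[of _ "\<lambda>(a,b,s,t). (a-b, b, s, s+t)" "\<lambda>(m,n,x,y). (m+n, n, x, y-x)"])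
    fix p assume "p \<in> ?B" then show "(\<lambda>(a,b,s,t). (a-b, b, s, s+t)) ((\<lambda>(m,n,x,y). (m+n, n, x, y-x)) p) = p"
      by (auto simp: QS_def)
  next
    fix p assume "p \<in> ?B" then show "(\<lambda>(m,n,x,y). (m+n, n, x, y-x)) p \<in> ?G"
      apply (cases p) apply (auto simp: QS_def)
      by (simp_all add: nat_aux1 nat_aux2 nat_aux3 nat_aux4)
  next
    fix p assume "p \<in> ?G" then show "(\<lambda>(m,n,x,y). (m+n, n, x, y-x)) ((\<lambda>(a,b,s,t). (a-b, b, s, s+t)) p) = p"
      by (auto simp: QS_def)
  next
    fix p assume "p \<in> ?G" then show "(\<lambda>(a,b,s,t). (a-b, b, s, s+t)) p \<in> ?B"
      apply (cases p) apply (auto simp: QS_def)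
      by (simp_all add: nat_aux1 nat_aux2 nat_aux3 nat_aux4)
  next
    fix p assume "p \<in> ?B" then show "(\<lambda>(m,n,x,y). \<phi> (m - n) n) ((\<lambda>(m,n,x,y). (m+n, n, x, y-x)) p) = (\<lambda>(m,n,x,y). \<phi> m n) p"
      by (auto simp: QS_def)
  qed
  ultimately show ?thesis by (simp add: sum.distrib split_def)
qed

lemma sum_QS_master:
  fixes \<phi> :: "nat \<Rightarrow> nat \<Rightarrow> real"
  shows "(\<Sum>(m,n,x,y)\<in>{p\<in>QS K. fst (snd p) < fst p}. \<phi> m n + \<phi> n m - \<phi> n (m-n) - \<phi> (m-n) n) =
     (\<Sum>(m,n,x,y)\<in>{p\<in>QS K. fst (snd (snd p)) = snd (snd (snd p))}. \<phi> m n) -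
     (\<Sum>(m,n,x,y)\<in>{p\<in>QS K. fst p = fst (snd p)}. \<phi> m m)"
proof -
  have "(\<Sum>(m,n,x,y)\<in>{p\<in>QS K. fst (snd p) < fst p}. \<phi> m n + \<phi> n m - \<phi> n (m-n) - \<phi> (m-n) n) =
    (\<Sum>(m,n,x,y)\<in>{p\<in>QS K. fst (snd p) < fst p}. \<phi> m n + \<phi> n m) -
    (\<Sum>(m,n,x,y)\<in>{p\<in>QS K. fst (snd p) < fst p}. \<phi> n (m-n) + \<phi> (m-n) n)"
    by (simp add: split_def sum_subtractf[symmetric] algebra_simps)
  then show ?thesis using sum_QS_mn[of \<phi> K] sum_QS_xy[of \<phi> K] by simp
qed

lemma sum_QS_eq:
  fixes f :: "nat \<Rightarrow> real"
  assumes K: "K > 0"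
  shows "(\<Sum>(m,n,x,y)\<in>{p\<in>QS K. fst p = fst (snd p)}. f m) =
     (\<Sum>d\<in>{d. d dvd K}. (real (K div d) - 1) * f d)"
proof -
  have fin: "finite {d. d dvd K}" using K by simp
  have "(\<Sum>(m,n,x,y)\<in>{p\<in>QS K. fst p = fst (snd p)}. f m) =
        (\<Sum>(d,x)\<in>Sigma {d. d dvd K} (\<lambda>d. {1..<K div d}). f d)"
  proof (rule sum.reindex_bij_witness[of _ "\<lambda>(d,x). (d,d,x,K div d - x)" "\<lambda>(m,n,x,y). (m,x)"])
    fix p assume "p \<in> {p\<in>QS K. fst p = fst (snd p)}"
    then obtain m x y where p: "p = (m,m,x,y)" "0<m" "0<x" "0<y" "m*x+m*y = K"
      by (auto simp: QS_def)
    have "K div m = x + y" using p by (metis add_mult_distrib2 nonzero_mult_div_cancel_left not_gr0)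
    then show "(\<lambda>(d,x). (d,d,x,K div d - x)) ((\<lambda>(m,n,x,y). (m,x)) p) = p" using p by simp
    show "(\<lambda>(m,n,x,y). (m,x)) p \<in> Sigma {d. d dvd K} (\<lambda>d. {1..<K div d})"
      using p \<open>K div m = x + y\<close> by (auto simp: add_mult_distrib2[symmetric])
    show "(\<lambda>(d,x). f d) ((\<lambda>(m,n,x,y). (m,x)) p) = (\<lambda>(m,n,x,y). f m) p" using p by simp
  next
    fix q assume q: "q \<in> Sigma {d. d dvd K} (\<lambda>d. {1..<K div d})"
    then obtain d x where q: "q = (d,x)" "d dvd K" "1 \<le> x" "x < K div d" by auto
    then show "(\<lambda>(m,n,x,y). (m,x)) ((\<lambda>(d,x). (d,d,x,K div d - x)) q) = q" by simp
    have "d > 0" using q K by (metis dvd_0_left_iff not_gr0)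
    have "d*x \<le> d*(K div d)" using q by (metis less_imp_le_nat mult_le_mono2)
    then have "d*x + d*(K div d - x) = d * (K div d)" using q by (simp add: diff_mult_distrib2)
    also have "\<dots> = K" using q by simp
    finally show "(\<lambda>(d,x). (d,d,x,K div d - x)) q \<in> {p\<in>QS K. fst p = fst (snd p)}"
      using q \<open>d > 0\<close> by (auto simp: QS_def)
  qed
  also have "\<dots> = (\<Sum>d\<in>{d. d dvd K}. \<Sum>x\<in>{1..<K div d}. f d)"
    by (subst sum.Sigma[symmetric]) (use fin in auto)
  also have "\<dots> = (\<Sum>d\<in>{d. d dvd K}. (real (K div d) - 1) * f d)"
  proof (rule sum.cong)
    fix d assume "d \<in> {d. d dvd K}"
    then have "K div d \<ge> 1" using K
      by (metis One_nat_def div_greater_zero_iff dvd_div_eq_0_iff less_one mem_Collect_eq not_less nat_dvd_not_less zero_less_iff_neq_zero) 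
    then show "(\<Sum>x\<in>{1..<K div d}. f d) = (real (K div d) - 1) * f d"
      by (simp add: of_nat_diff)
  qed simp
  finally show ?thesis .
qed

lemma sum_QS_xyeq:
  fixes \<phi> :: "nat \<Rightarrow> nat \<Rightarrow> real"
  assumes K: "K > 0"
  shows "(\<Sum>(m,n,x,y)\<in>{p\<in>QS K. fst (snd (snd p)) = snd (snd (snd p))}. \<phi> m n) =
     (\<Sum>N\<in>{N. N dvd K}. \<Sum>m\<in>{1..<N}. \<phi> m (N-m))"
proof -
  have fin: "finite {d. d dvd K}" using K by simp
  have "(\<Sum>(m,n,x,y)\<in>{p\<in>QS K. fst (snd (snd p)) = snd (snd (snd p))}. \<phi> m n) =
        (\<Sum>(N,m)\<in>Sigma {N. N dvd K} (\<lambda>N. {1..<N}). \<phi> m (N-m))"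
  proof (rule sum.reindex_bij_witness[of _ "\<lambda>(N,m). (m, N-m, K div N, K div N)" "\<lambda>(m,n,x,y). (m+n,m)"])
    fix p assume "p \<in> {p\<in>QS K. fst (snd (snd p)) = snd (snd (snd p))}"
    then obtain m n x where p: "p = (m,n,x,x)" "0<m" "0<n" "0<x" "(m+n)*x = K"
      by (auto simp: QS_def add_mult_distrib)
    have "K div (m+n) = x" using p by auto
    then show "(\<lambda>(N,m). (m, N-m, K div N, K div N)) ((\<lambda>(m,n,x,y). (m+n,m)) p) = p" using p by simp
    show "(\<lambda>(m,n,x,y). (m+n,m)) p \<in> Sigma {N. N dvd K} (\<lambda>N. {1..<N})"
      using p by auto
    show "(\<lambda>(N,m). \<phi> m (N-m)) ((\<lambda>(m,n,x,y). (m+n,m)) p) = (\<lambda>(m,n,x,y). \<phi> m n) p" using p by simp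
  next
    fix q assume q: "q \<in> Sigma {N. N dvd K} (\<lambda>N. {1..<N})"
    then obtain N m where q: "q = (N,m)" "N dvd K" "1 \<le> m" "m < N" by auto
    then show "(\<lambda>(m,n,x,y). (m+n,m)) ((\<lambda>(N,m). (m, N-m, K div N, K div N)) q) = q" by simp
    have "K div N > 0" using q K by (metis dvd_mult_div_cancel mult_0_right neq0_conv)
    have "m * (K div N) + (N-m) * (K div N) = N * (K div N)" using q
      by (metis add_mult_distrib le_add_diff_inverse less_imp_le_nat)
    also have "\<dots> = K" using q by simp
    finally show "(\<lambda>(N,m). (m, N-m, K div N, K div N)) q \<in> {p\<in>QS K. fst (snd (snd p)) = snd (snd (snd p))}"
      using q \<open>K div N > 0\<close> by (auto simp: QS_def)
  qed
  also have "\<dots> = (\<Sum>N\<in>{N. N dvd K}. \<Sum>m\<in>{1..<N}. \<phi> m (N-m))"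
    by (subst sum.Sigma[symmetric]) (use fin in auto)
  finally show ?thesis .
qed

lemma sigma_0 [simp]: "sigma r 0 = 0"
  by (simp add: sigma_def)

lemma real_sigma: "i > 0 \<Longrightarrow> real (sigma r i) = (\<Sum>d\<in>{d. d dvd i}. real d ^ r)"
  by (simp add: sigma_def)

lemma conv_QS:
  fixes a b :: nat
  shows "(\<Sum>i=0..K. real (sigma a i) * real (sigma b (K-i))) = (\<Sum>(m,n,x,y)\<in>QS K. real m ^ a * real n ^ b)"
proof -
  have "(\<Sum>i=0..K. real (sigma a i) * real (sigma b (K-i))) = (\<Sum>i\<in>{1..<K}. real (sigma a i) * real (sigma b (K-i)))"
    by (rule sum.mono_neutral_right) (auto simp: Suc_le_eq)
  also have "\<dots> = (\<Sum>i\<in>{1..<K}. \<Sum>(d,e)\<in>{d. d dvd i} \<times> {e. e dvd (K-i)}. real d ^ a * real e ^ b)"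
  proof (rule sum.cong)
    fix i assume i: "i \<in> {1..<K}"
    have f1: "finite {d. d dvd i}" "finite {e. e dvd (K-i)}" using i by auto
    show "real (sigma a i) * real (sigma b (K-i)) = (\<Sum>(d,e)\<in>{d. d dvd i} \<times> {e. e dvd (K-i)}. real d ^ a * real e ^ b)"
      using i f1 by (simp add: real_sigma sum_product sum.cartesian_product)
  qed simp
  also have "\<dots> = (\<Sum>(i,d,e)\<in>Sigma {1..<K} (\<lambda>i. {d. d dvd i} \<times> {e. e dvd (K-i)}). real d ^ a * real e ^ b)"
    by (subst sum.Sigma) (auto simp: split_def)
  also have "\<dots> = (\<Sum>(m,n,x,y)\<in>QS K. real m ^ a * real n ^ b)"
  proof (rule sum.reindex_bij_witness[of _ "\<lambda>(m,n,x,y). (m*x, m, n)" "\<lambda>(i,d,e). (d, e, i div d, (K-i) div e)"])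
    fix q assume "q \<in> Sigma {1..<K} (\<lambda>i. {d. d dvd i} \<times> {e. e dvd (K-i)})"
    then obtain i d e where q: "q = (i,d,e)" "1 \<le> i" "i < K" "d dvd i" "e dvd (K-i)" by auto
    have "d > 0" "e > 0" using q by (auto intro!: Nat.gr0I)
    show "(\<lambda>(m,n,x,y). (m*x, m, n)) ((\<lambda>(i,d,e). (d, e, i div d, (K-i) div e)) q) = q"
      using q by simp
    have "i div d > 0" "(K-i) div e > 0" using q \<open>d>0\<close> \<open>e>0\<close>
      by (auto simp: dvd_div_eq_0_iff intro!: Nat.gr0I dest: dvd_imp_le)
    moreover have "d * (i div d) + e * ((K-i) div e) = K" using q by simp
    ultimately show "(\<lambda>(i,d,e). (d, e, i div d, (K-i) div e)) q \<in> QS K"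
      using q \<open>d>0\<close> \<open>e>0\<close> by (simp add: QS_def)
    show "(\<lambda>(m,n,x,y). real m ^ a * real n ^ b) ((\<lambda>(i,d,e). (d, e, i div d, (K-i) div e)) q) =
          (\<lambda>(i,d,e). real d ^ a * real e ^ b) q" using q by simp
  next
    fix p assume "p \<in> QS K"
    then obtain m n x y where p: "p = (m,n,x,y)" "0<m" "0<n" "0<x" "0<y" "m*x+n*y = K"
      by (auto simp: QS_def)
    show "(\<lambda>(i,d,e). (d, e, i div d, (K-i) div e)) ((\<lambda>(m,n,x,y). (m*x, m, n)) p) = p"
      using p by auto
    have "m*x \<ge> 1" "n*y \<ge> 1" using p by auto
    then show "(\<lambda>(m,n,x,y). (m*x, m, n)) p \<in> Sigma {1..<K} (\<lambda>i. {d. d dvd i} \<times> {e. e dvd (K-i)})"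
      using p by auto
  qed
  finally show ?thesis .
qed


lemma S1: "2 * (\<Sum>m<N. real m) = real N * (real N - 1)"
  by (induction N) (auto simp: algebra_simps)
lemma S2: "6 * (\<Sum>m<N. real m ^ 2) = real N * (real N - 1) * (2 * real N - 1)"
  by (induction N) (auto simp: algebra_simps power2_eq_square)
lemma S3: "4 * (\<Sum>m<N. real m ^ 3) = (real N * (real N - 1))^2"
  by (induction N) (auto simp: algebra_simps power2_eq_square power3_eq_cube)
lemma S4: "30 * (\<Sum>m<N. real m ^ 4) = real N * (real N - 1) * (2 * real N - 1) * (3 * real N ^ 2 - 3 * real N - 1)"
  by (induction N) (auto simp: algebra_simps power2_eq_square power3_eq_cube power4_eq_xxxx)
lemma S5: "12 * (\<Sum>m<N. real m ^ 5) = (real N * (real N - 1))^2 * (2 * real N ^ 2 - 2 * real N - 1)"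
proof (induction N)
  case (Suc N) then show ?case by (simp add: algebra_simps power2_eq_square power3_eq_cube power4_eq_xxxx eval_nat_numeral)
qed simp
lemma S6: "42 * (\<Sum>m<N. real m ^ 6) = real N * (real N - 1) * (2 * real N - 1) * (3 * real N ^ 4 - 6 * real N ^ 3 + 3 * real N + 1)"
proof (induction N)
  case (Suc N) then show ?case by (simp add: algebra_simps power2_eq_square power3_eq_cube power4_eq_xxxx eval_nat_numeral)
qed simp

lemma S1': "(\<Sum>m<N. real m) = real N * (real N - 1) / 2" using S1[of N] by simp
lemma S2': "(\<Sum>m<N. real m ^ 2) = real N * (real N - 1) * (2 * real N - 1) / 6" using S2[of N] by simp
lemma S3': "(\<Sum>m<N. real m ^ 3) = (real N * (real N - 1))^2 / 4" using S3[of N] by simp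
lemma S4': "(\<Sum>m<N. real m ^ 4) = real N * (real N - 1) * (2 * real N - 1) * (3 * real N ^ 2 - 3 * real N - 1) / 30" using S4[of N] by simp
lemma S5': "(\<Sum>m<N. real m ^ 5) = (real N * (real N - 1))^2 * (2 * real N ^ 2 - 2 * real N - 1) / 12" using S5[of N] by simp
lemma S6': "(\<Sum>m<N. real m ^ 6) = real N * (real N - 1) * (2 * real N - 1) * (3 * real N ^ 4 - 6 * real N ^ 3 + 3 * real N + 1) / 42" using S6[of N] by simp

lemma sum_1N: "(\<Sum>m\<in>{1..<N}. f m) = (\<Sum>m<N. f m) - (if N = 0 then 0 else f 0)" for f :: "nat \<Rightarrow> real"
proof (cases N)
  case (Suc n)
  have "{..<N} = insert 0 {1..<N}" using Suc by auto
  then show ?thesis using Suc by simp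
qed simp

lemma sum_1N0: "f 0 = 0 \<Longrightarrow> (\<Sum>m\<in>{1..<N}. f m) = (\<Sum>m<N. f m)" for f :: "nat \<Rightarrow> real"
  using sum_1N[of f N] by simp

lemma P1: "6 * (\<Sum>m\<in>{1..<N}. real m * (real N - real m)) = real N ^ 3 - real N"
proof -
  have "(\<Sum>m\<in>{1..<N}. real m * (real N - real m)) = (\<Sum>m<N. real N * real m - real m ^ 2)"
    by (subst sum_1N0) (simp_all add: algebra_simps power2_eq_square)
  also have "\<dots> = real N * (\<Sum>m<N. real m) - (\<Sum>m<N. real m ^ 2)"
    by (simp add: sum_subtractf sum_distrib_left)
  finally show ?thesis unfolding S1' S2' by (simp add: field_simps power3_eq_cube power2_eq_square)
qed

lemma P2: "30 * (\<Sum>m\<in>{1..<N}. (real m * (real N - real m))^2) = real N ^ 5 - real N"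
proof -
  have "(\<Sum>m\<in>{1..<N}. (real m * (real N - real m))^2) = (\<Sum>m<N. real N^2 * real m^2 - 2 * real N * real m^3 + real m ^ 4)"
    by (subst sum_1N0) (simp_all add: algebra_simps power2_eq_square power3_eq_cube power4_eq_xxxx)
  also have "\<dots> = real N^2 * (\<Sum>m<N. real m^2) - 2 * real N * (\<Sum>m<N. real m ^ 3) + (\<Sum>m<N. real m ^ 4)"
    by (simp add: sum.distrib sum_subtractf sum_distrib_left mult.assoc)
  finally show ?thesis unfolding S2' S3' S4' by (simp add: field_simps power2_eq_square power3_eq_cube eval_nat_numeral)
qed

lemma P3: "420 * (\<Sum>m\<in>{1..<N}. (real m * (real N - real m))^3) = 3 * real N ^ 7 + 7 * real N ^ 3 - 10 * real N"
proof -
  have "(\<Sum>m\<in>{1..<N}. (real m * (real N - real m))^3) =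
     (\<Sum>m<N. real N^3 * real m^3 - 3 * real N^2 * real m^4 + 3 * real N * real m ^ 5 - real m ^ 6)"
    by (subst sum_1N0) (simp_all add: algebra_simps power2_eq_square power3_eq_cube power4_eq_xxxx eval_nat_numeral)
  also have "\<dots> = real N^3 * (\<Sum>m<N. real m^3) - 3 * real N^2 * (\<Sum>m<N. real m ^ 4) + 3 * real N * (\<Sum>m<N. real m ^ 5) - (\<Sum>m<N. real m ^ 6)"
    by (simp add: sum.distrib sum_subtractf sum_distrib_left mult.assoc)
  finally show ?thesis unfolding S3' S4' S5' S6' by (simp add: field_simps power2_eq_square power3_eq_cube eval_nat_numeral)
qed

lemma P1': "(\<Sum>m\<in>{1..<N}. real m * (real N - real m)) = (real N ^ 3 - real N) / 6"
  using P1[of N] by simp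
lemma P2': "(\<Sum>m\<in>{1..<N}. (real m * (real N - real m))^2) = (real N ^ 5 - real N) / 30"
  using P2[of N] by simp
lemma P3': "(\<Sum>m\<in>{1..<N}. (real m * (real N - real m))^3) = (3 * real N ^ 7 + 7 * real N ^ 3 - 10 * real N) / 420"
  using P3[of N] by simp

lemma P1'': "(\<Sum>m\<in>{Suc 0..<N}. real m * (real N - real m)) = (real N ^ 3 - real N) / 6"
  using P1' by simp
lemma P2'': "(\<Sum>m\<in>{Suc 0..<N}. (real m * (real N - real m))^2) = (real N ^ 5 - real N) / 30"
  using P2' by simp
lemma P3'': "(\<Sum>m\<in>{Suc 0..<N}. (real m * (real N - real m))^3) = (3 * real N ^ 7 + 7 * real N ^ 3 - 10 * real N) / 420"
  using P3' by simp


definition conv :: "nat \<Rightarrow> nat \<Rightarrow> nat \<Rightarrow> real" where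
  "conv a b K = (\<Sum>i=0..K. real (sigma a i) * real (sigma b (K-i)))"

lemma conv_general:
  fixes \<phi> \<Psi> :: "nat \<Rightarrow> nat \<Rightarrow> real" and c :: real
  assumes K: "K > 0"
    and sym: "\<And>m n. n < m \<Longrightarrow> \<phi> m n + \<phi> n m = c * (\<Psi> m n + \<Psi> n m - \<Psi> n (m-n) - \<Psi> (m-n) n)"
  shows "(\<Sum>(m,n,x,y)\<in>QS K. \<phi> m n) =
    (\<Sum>d\<in>{d. d dvd K}. (real (K div d) - 1) * \<phi> d d + c * ((\<Sum>m\<in>{1..<d}. \<Psi> m (d-m)) - (real (K div d) - 1) * \<Psi> d d))"
proof -
  have "(\<Sum>(m,n,x,y)\<in>{p\<in>QS K. fst (snd p) < fst p}. \<phi> m n + \<phi> n m) =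
        (\<Sum>(m,n,x,y)\<in>{p\<in>QS K. fst (snd p) < fst p}. c * (\<Psi> m n + \<Psi> n m - \<Psi> n (m-n) - \<Psi> (m-n) n))"
    by (rule sum.cong) (auto simp: sym)
  also have "\<dots> = c * (\<Sum>(m,n,x,y)\<in>{p\<in>QS K. fst (snd p) < fst p}. \<Psi> m n + \<Psi> n m - \<Psi> n (m-n) - \<Psi> (m-n) n)"
    by (simp add: sum_distrib_left split_def)
  also have "\<dots> = c * ((\<Sum>N\<in>{N. N dvd K}. \<Sum>m\<in>{1..<N}. \<Psi> m (N-m)) - (\<Sum>d\<in>{d. d dvd K}. (real (K div d) - 1) * \<Psi> d d))"
    unfolding sum_QS_master sum_QS_xyeq[OF K] sum_QS_eq[OF K] ..
  finally have *: "(\<Sum>(m,n,x,y)\<in>{p\<in>QS K. fst (snd p) < fst p}. \<phi> m n + \<phi> n m) = \<dots>" .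
  show ?thesis
    unfolding sum_QS_mn[of \<phi> K] * sum_QS_eq[OF K]
    by (simp add: sum.distrib sum_subtractf sum_distrib_left algebra_simps)
qed

lemma conv_11:
  assumes K: "K > 0"
  shows "12 * conv 1 1 K = 5 * real (sigma 3 K) + real (sigma 1 K) - 6 * real K * real (sigma 1 K)"
proof -
  define \<Psi> :: "nat \<Rightarrow> nat \<Rightarrow> real" where "\<Psi> m n = real m ^ 2 + real m * real n + real n ^ 2" for m n
  have fin: "finite {d. d dvd K}" using K by simp
  have "conv 1 1 K = (\<Sum>(m,n,x,y)\<in>QS K. real m * real n)"
    unfolding conv_def conv_QS by simp
  also have "\<dots> = (\<Sum>d\<in>{d. d dvd K}. (real (K div d) - 1) * (real d * real d) + 1/2 * ((\<Sum>m\<in>{1..<d}. \<Psi> m (d-m)) - (real (K div d) - 1) * \<Psi> d d))"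
    by (rule conv_general[OF K]) (auto simp: \<Psi>_def of_nat_diff algebra_simps power2_eq_square)
  also have "\<dots> = (\<Sum>d\<in>{d. d dvd K}. (5 * real d ^ 3 + real d - 6 * real K * real d) / 12)"
  proof (rule sum.cong)
    fix d assume d: "d \<in> {d. d dvd K}"
    then have Kd: "real K = real d * real (K div d)" by (metis dvd_mult_div_cancel mem_Collect_eq of_nat_mult)
    have "(\<Sum>m\<in>{1..<d}. \<Psi> m (d-m)) = (\<Sum>m\<in>{1..<d}. real d ^ 2 - real m * (real d - real m))"
      by (rule sum.cong) (auto simp: \<Psi>_def of_nat_diff algebra_simps power2_eq_square)
    also have "\<dots> = (real d - 1) * real d ^ 2 - (real d ^ 3 - real d) / 6"
      using P1[of d] d K by (cases "d = 0") (auto simp: sum_subtractf of_nat_diff)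
    finally show "(real (K div d) - 1) * (real d * real d) + 1/2 * ((\<Sum>m\<in>{1..<d}. \<Psi> m (d-m)) - (real (K div d) - 1) * \<Psi> d d)
        = (5 * real d ^ 3 + real d - 6 * real K * real d) / 12"
      unfolding Kd by (simp add: \<Psi>_def field_simps power2_eq_square power3_eq_cube)
  qed simp
  finally show ?thesis using K
    by (simp add: sigma_def sum_divide_distrib[symmetric] sum_subtractf sum.distrib sum_distrib_left)
qed

lemma conv_13:
  assumes K: "K > 0"
  shows "240 * conv 1 3 K = 21 * real (sigma 5 K) + 10 * real (sigma 3 K) - real (sigma 1 K) - 30 * real K * real (sigma 3 K)"
proof -
  define \<Psi> :: "nat \<Rightarrow> nat \<Rightarrow> real" where "\<Psi> m n = (real m ^ 2 + real m * real n + real n ^ 2)^2" for m n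
  have fin: "finite {d. d dvd K}" using K by simp
  have "conv 1 3 K = (\<Sum>(m,n,x,y)\<in>QS K. real m * real n ^ 3)"
    unfolding conv_def conv_QS by simp
  also have "\<dots> = (\<Sum>d\<in>{d. d dvd K}. (real (K div d) - 1) * (real d * real d ^ 3) + 1/8 * ((\<Sum>m\<in>{1..<d}. \<Psi> m (d-m)) - (real (K div d) - 1) * \<Psi> d d))"
    by (rule conv_general[OF K]) (auto simp: \<Psi>_def of_nat_diff algebra_simps power2_eq_square power3_eq_cube)
  also have "\<dots> = (\<Sum>d\<in>{d. d dvd K}. (21 * real d ^ 5 + 10 * real d ^ 3 - real d - 30 * real K * real d ^ 3) / 240)"
  proof (rule sum.cong)
    fix d assume d: "d \<in> {d. d dvd K}"
    then have Kd: "real K = real d * real (K div d)" by (metis dvd_mult_div_cancel mem_Collect_eq of_nat_mult)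
    have "(\<Sum>m\<in>{1..<d}. \<Psi> m (d-m)) = (\<Sum>m\<in>{1..<d}. real d ^ 4 - 2 * real d ^ 2 * (real m * (real d - real m)) + (real m * (real d - real m))^2)"
      by (rule sum.cong) (auto simp: \<Psi>_def of_nat_diff algebra_simps power2_eq_square power4_eq_xxxx)
    also have "\<dots> = (real d - 1) * real d ^ 4 - 2 * real d ^ 2 * ((real d ^ 3 - real d) / 6) + (real d ^ 5 - real d) / 30"
      using d K by (cases "d = 0") (auto simp: sum.distrib sum_subtractf sum_distrib_left[symmetric] of_nat_diff P1' P2' P1'' P2'')
    finally show "(real (K div d) - 1) * (real d * real d ^ 3) + 1/8 * ((\<Sum>m\<in>{1..<d}. \<Psi> m (d-m)) - (real (K div d) - 1) * \<Psi> d d)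
        = (21 * real d ^ 5 + 10 * real d ^ 3 - real d - 30 * real K * real d ^ 3) / 240"
      unfolding Kd by (simp add: \<Psi>_def field_simps power2_eq_square power3_eq_cube eval_nat_numeral)
  qed simp
  finally show ?thesis using K
    by (simp add: sigma_def sum_divide_distrib[symmetric] sum_subtractf sum.distrib sum_distrib_left)
qed

lemma conv_15_33:
  assumes K: "K > 0"
  shows "12096 * conv 1 5 K - 57600 * conv 3 3 K = 504 * real (sigma 5 K) + 24 * real (sigma 1 K) + 480 * real (sigma 3 K) - 1008 * real K * real (sigma 5 K)"
proof -
  define \<Psi> :: "nat \<Rightarrow> nat \<Rightarrow> real" where "\<Psi> m n = 2016 * (real m ^ 6 + real n ^ 6) + 6048 * (real m ^ 5 * real n + real m * real n ^ 5)
     - 23760 * (real m ^ 4 * real n ^ 2 + real m ^ 2 * real n ^ 4) - 57600 * real m ^ 3 * real n ^ 3" for m n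
  have fin: "finite {d. d dvd K}" using K by simp
  have "12096 * conv 1 5 K - 57600 * conv 3 3 K = (\<Sum>(m,n,x,y)\<in>QS K. 12096 * (real m * real n ^ 5) - 57600 * (real m ^ 3 * real n ^ 3))"
    unfolding conv_def conv_QS by (simp add: sum_subtractf sum_distrib_left split_def)
  also have "\<dots> = (\<Sum>d\<in>{d. d dvd K}. (real (K div d) - 1) * (12096 * (real d * real d ^ 5) - 57600 * (real d ^ 3 * real d ^ 3)) + 1/2 * ((\<Sum>m\<in>{1..<d}. \<Psi> m (d-m)) - (real (K div d) - 1) * \<Psi> d d))"
    by (rule conv_general[OF K]) (auto simp: \<Psi>_def of_nat_diff algebra_simps power2_eq_square power3_eq_cube eval_nat_numeral)
  also have "\<dots> = (\<Sum>d\<in>{d. d dvd K}. 504 * real d ^ 5 + 24 * real d + 480 * real d ^ 3 - 1008 * real K * real d ^ 5)"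
  proof (rule sum.cong)
    fix d assume d: "d \<in> {d. d dvd K}"
    then have Kd: "real K = real d * real (K div d)" by (metis dvd_mult_div_cancel mem_Collect_eq of_nat_mult)
    have "(\<Sum>m\<in>{1..<d}. \<Psi> m (d-m)) = (\<Sum>m\<in>{1..<d}. 2016 * real d ^ 6 - 6048 * real d ^ 4 * (real m * (real d - real m))
         - 29808 * real d ^ 2 * (real m * (real d - real m))^2 - 2016 * (real m * (real d - real m))^3)"
      by (rule sum.cong) (auto simp: \<Psi>_def of_nat_diff algebra_simps power2_eq_square power3_eq_cube eval_nat_numeral)
    also have "\<dots> = 2016 * (real d - 1) * real d ^ 6 - 6048 * real d ^ 4 * ((real d ^ 3 - real d) / 6)
         - 29808 * real d ^ 2 * ((real d ^ 5 - real d) / 30) - 2016 * ((3 * real d ^ 7 + 7 * real d ^ 3 - 10 * real d) / 420)"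
      using d K by (cases "d = 0") (auto simp: sum.distrib sum_subtractf sum_distrib_left[symmetric] of_nat_diff P1' P2' P3' P1'' P2'' P3'')
    finally show "(real (K div d) - 1) * (12096 * (real d * real d ^ 5) - 57600 * (real d ^ 3 * real d ^ 3)) + 1/2 * ((\<Sum>m\<in>{1..<d}. \<Psi> m (d-m)) - (real (K div d) - 1) * \<Psi> d d)
        = 504 * real d ^ 5 + 24 * real d + 480 * real d ^ 3 - 1008 * real K * real d ^ 5"
      unfolding Kd by (simp add: \<Psi>_def field_simps power2_eq_square power3_eq_cube eval_nat_numeral)
  qed simp
  finally show ?thesis using K
    by (simp add: sigma_def sum_subtractf sum.distrib sum_distrib_left)
qed


definition Tf :: "nat \<Rightarrow> complex fps" where
  "Tf r = Abs_fps (\<lambda>n. of_nat (sigma r n))"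

definition Dop :: "complex fps \<Rightarrow> complex fps" where
  "Dop f = fps_X * fps_deriv f"

definition "Af = 1 - 24 * Tf 1"
definition "Bf = 1 + 240 * Tf 3"
definition "Cf = 1 - 504 * Tf 5"

lemma nth_num_mult [simp]: "(numeral k * f) $ n = numeral k * f $ n" for f :: "complex fps"
  by (simp add: numeral_fps_const)

lemma Tf_nth [simp]: "Tf r $ n = of_nat (sigma r n)"
  by (simp add: Tf_def)

lemma Tf_mult_nth: "(Tf a * Tf b) $ K = of_real (conv a b K)"
  by (simp add: fps_mult_nth conv_def)

lemma Dop_nth: "Dop f $ n = of_nat n * f $ n"
  by (cases n) (simp_all add: Dop_def)

lemma Dop_lin: "Dop (c - numeral k * f) = - numeral k * Dop f" "Dop (c + numeral k * f) = numeral k * Dop f"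
  if "c = 1"
  using that by (simp_all add: Dop_def numeral_fps_const algebra_simps flip: fps_const_neg)

lemma F1: "12 * Dop Af = Af^2 - Bf"
proof -
  have e: "Af^2 - Bf = 576 * (Tf 1 * Tf 1) - 48 * Tf 1 - 240 * Tf 3"
    by (simp add: Af_def Bf_def algebra_simps power2_eq_square)
  show ?thesis unfolding e
  proof (rule fps_ext)
    fix n
    have r: "-288 * real n * real (sigma 1 n) = 576 * conv 1 1 n - 48 * real (sigma 1 n) - 240 * real (sigma 3 n)"
    proof (cases "n = 0")
      case True then show ?thesis by (simp add: conv_def)
    next
      case False then show ?thesis using conv_11[of n] by simp
    qed
    have "(of_real (-288 * real n * real (sigma 1 n)) :: complex) = of_real (576 * conv 1 1 n - 48 * real (sigma 1 n) - 240 * real (sigma 3 n))"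
      using r by simp
    then show "(12 * Dop Af) $ n = (576 * (Tf 1 * Tf 1) - 48 * Tf 1 - 240 * Tf 3) $ n"
      by (simp add: Af_def Dop_lin Dop_nth Tf_mult_nth mult.assoc)
  qed
qed

lemma F2: "3 * Dop Bf = Af * Bf - Cf"
proof -
  have e: "Af * Bf - Cf = 240 * Tf 3 - 24 * Tf 1 - 5760 * (Tf 1 * Tf 3) + 504 * Tf 5"
    by (simp add: Af_def Bf_def Cf_def algebra_simps)
  show ?thesis unfolding e
  proof (rule fps_ext)
    fix n
    have r: "720 * real n * real (sigma 3 n) = 240 * real (sigma 3 n) - 24 * real (sigma 1 n) - 5760 * conv 1 3 n + 504 * real (sigma 5 n)"
    proof (cases "n = 0")
      case True then show ?thesis by (simp add: conv_def)
    next
      case False then show ?thesis using conv_13[of n] by simp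
    qed
    have "(of_real (720 * real n * real (sigma 3 n)) :: complex) = of_real (240 * real (sigma 3 n) - 24 * real (sigma 1 n) - 5760 * conv 1 3 n + 504 * real (sigma 5 n))"
      using r by simp
    then show "(3 * Dop Bf) $ n = (240 * Tf 3 - 24 * Tf 1 - 5760 * (Tf 1 * Tf 3) + 504 * Tf 5) $ n"
      by (simp add: Bf_def Dop_lin Dop_nth Tf_mult_nth mult.assoc)
  qed
qed

lemma F3: "2 * Dop Cf = Af * Cf - Bf^2"
proof -
  have e: "Af * Cf - Bf^2 = 12096 * (Tf 1 * Tf 5) - 57600 * (Tf 3 * Tf 3) - 504 * Tf 5 - 24 * Tf 1 - 480 * Tf 3"
    by (simp add: Af_def Bf_def Cf_def algebra_simps power2_eq_square)
  show ?thesis unfolding e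
  proof (rule fps_ext)
    fix n
    have r: "-1008 * real n * real (sigma 5 n) = 12096 * conv 1 5 n - 57600 * conv 3 3 n - 504 * real (sigma 5 n) - 24 * real (sigma 1 n) - 480 * real (sigma 3 n)"
    proof (cases "n = 0")
      case True then show ?thesis by (simp add: conv_def)
    next
      case False then show ?thesis using conv_15_33[of n] by simp
    qed
    have "(of_real (-1008 * real n * real (sigma 5 n)) :: complex) = of_real (12096 * conv 1 5 n - 57600 * conv 3 3 n - 504 * real (sigma 5 n) - 24 * real (sigma 1 n) - 480 * real (sigma 3 n))"
      using r by simp
    then show "(2 * Dop Cf) $ n = (12096 * (Tf 1 * Tf 5) - 57600 * (Tf 3 * Tf 3) - 504 * Tf 5 - 24 * Tf 1 - 480 * Tf 3) $ n"
      by (simp add: Cf_def Dop_lin Dop_nth Tf_mult_nth mult.assoc)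
  qed
qed


definition R1 :: "complex fps \<Rightarrow> bool" where "R1 F \<longleftrightarrow> fps_conv_radius F \<ge> 1"

lemma R1_add: "R1 F \<Longrightarrow> R1 G \<Longrightarrow> R1 (F + G)"
  unfolding R1_def using fps_conv_radius_add[of F G] by (auto simp: min_def split: if_splits)
lemma R1_diff: "R1 F \<Longrightarrow> R1 G \<Longrightarrow> R1 (F - G)"
  unfolding R1_def using fps_conv_radius_diff[of F G] by (auto simp: min_def split: if_splits)
lemma R1_mult: "R1 F \<Longrightarrow> R1 G \<Longrightarrow> R1 (F * G)"
  unfolding R1_def using fps_conv_radius_mult[of F G] by (auto simp: min_def split: if_splits)
lemma R1_1: "R1 1" unfolding R1_def by simp
lemma R1_numeral: "R1 (numeral k)" unfolding R1_def by simp
lemma R1_X: "R1 fps_X" unfolding R1_def by simp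
lemma R1_deriv: "R1 F \<Longrightarrow> R1 (fps_deriv F)"
  unfolding R1_def using fps_conv_radius_deriv[of F] by auto
lemma R1_Dop: "R1 F \<Longrightarrow> R1 (Dop F)"
  unfolding Dop_def by (intro R1_mult R1_X R1_deriv)

lemma R1_geom: "R1 (Abs_fps (\<lambda>n. 1))"
  unfolding R1_def fps_conv_radius_def
proof (rule conv_radius_geI_ex')
  fix r :: real assume "0 < r" "ereal r < 1"
  then have "norm (of_real r :: complex) < 1" by simp
  then show "summable (\<lambda>n. Abs_fps (\<lambda>n. 1::complex) $ n * of_real r ^ n)"
    using summable_geometric[of "of_real r :: complex"] by simp
qed

lemma R1_pow: "R1 (Abs_fps (\<lambda>n. (of_nat n :: complex) ^ p))"
proof (induction p)
  case 0 then show ?case using R1_geom by simp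
next
  case (Suc p)
  have "Abs_fps (\<lambda>n. (of_nat n :: complex) ^ Suc p) = Dop (Abs_fps (\<lambda>n. (of_nat n :: complex) ^ p))"
    by (rule fps_ext) (simp add: Dop_nth)
  then show ?case using R1_Dop[OF Suc] by simp
qed

lemma sigma_le: "sigma r n \<le> n ^ Suc r"
proof (cases "n = 0")
  case False
  have sub: "{d. d dvd n} \<subseteq> {1..n}" using False by (auto intro: dvd_imp_le Nat.gr0I)
  have "sigma r n = (\<Sum>d\<in>{d. d dvd n}. d ^ r)" by (simp add: sigma_def)
  also have "\<dots> \<le> (\<Sum>d\<in>{d. d dvd n}. n ^ r)"
    by (rule sum_mono) (use False in \<open>auto intro: power_mono dvd_imp_le\<close>)
  also have "\<dots> = card {d. d dvd n} * n ^ r" by simp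
  also have "\<dots> \<le> n * n ^ r"
    using card_mono[OF _ sub] by (intro mult_right_mono) auto
  finally show ?thesis by simp
qed simp

lemma R1_Tf: "R1 (Tf r)"
  unfolding R1_def fps_conv_radius_def
proof (rule conv_radius_geI_ex')
  fix \<rho> :: real assume \<rho>: "0 < \<rho>" "ereal \<rho> < 1"
  have "ereal (norm (of_real \<rho> :: complex)) < fps_conv_radius (Abs_fps (\<lambda>n. (of_nat n :: complex) ^ Suc r))"
  proof -
    have "ereal (norm (of_real \<rho> :: complex)) < 1" using \<rho> by simp
    then show ?thesis using R1_pow[of "Suc r"] unfolding R1_def by (rule less_le_trans)
  qed
  from norm_summable_fps[OF this]
  have s: "summable (\<lambda>n. norm ((of_nat n :: complex) ^ Suc r * of_real \<rho> ^ n))" by simp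
  show "summable (\<lambda>n. fps_nth (Tf r) n * of_real \<rho> ^ n)"
  proof (rule summable_comparison_test[OF _ s])
    show "\<exists>N. \<forall>n\<ge>N. norm (fps_nth (Tf r) n * of_real \<rho> ^ n) \<le> norm ((of_nat n :: complex) ^ Suc r * of_real \<rho> ^ n)"
    proof (intro exI allI impI)
      fix n :: nat
      have "real (sigma r n) \<le> real n ^ Suc r" using sigma_le[of r n] by (metis of_nat_le_iff of_nat_power)
      then show "norm (fps_nth (Tf r) n * of_real \<rho> ^ n) \<le> norm ((of_nat n :: complex) ^ Suc r * of_real \<rho> ^ n)"
        using \<rho> by (simp add: norm_mult norm_power mult_right_mono del: of_nat_Suc power_Suc)
    qed
  qed
qed

lemma R1_ABC: "R1 Af" "R1 Bf" "R1 Cf"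
  unfolding Af_def Bf_def Cf_def by (intro R1_diff R1_add R1_mult R1_1 R1_numeral R1_Tf)+

lemma norm_qn: "\<tau> \<in> UHP \<Longrightarrow> norm (qn \<tau>) < 1"
  by (simp add: qn_def UHP_def norm_exp)

lemma R1_lt: "R1 F \<Longrightarrow> norm z < 1 \<Longrightarrow> ereal (norm z) < fps_conv_radius F"
proof -
  assume "R1 F" "norm z < 1"
  then have "ereal (norm z) < 1" by simp
  then show ?thesis using \<open>R1 F\<close> unfolding R1_def by (rule less_le_trans)
qed

lemma eval_Tf: assumes "norm q < 1"
  shows "(\<Sum>n. of_nat (sigma r (Suc n)) * q ^ Suc n) = eval_fps (Tf r) q"
proof -
  have "(\<lambda>n. fps_nth (Tf r) n * q ^ n) sums eval_fps (Tf r) q"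
    by (rule sums_eval_fps[OF R1_lt[OF R1_Tf assms]])
  then have "(\<lambda>n. fps_nth (Tf r) (Suc n) * q ^ Suc n) sums eval_fps (Tf r) q"
    by (subst sums_Suc_iff) simp
  then show ?thesis by (simp add: sums_iff)
qed

lemma eval_num_mult: "eval_fps (numeral k * F) z = numeral k * eval_fps F z" if "R1 F" "norm z < 1"
  using that by (subst eval_fps_mult) (auto intro: R1_lt R1_numeral)

lemma E2_eval: "\<tau> \<in> UHP \<Longrightarrow> E2 \<tau> = eval_fps Af (qn \<tau>)"
  unfolding E2_def eval_Tf[OF norm_qn] Af_def
  by (subst eval_fps_diff) (auto intro!: R1_lt R1_mult R1_numeral R1_Tf norm_qn simp: eval_num_mult R1_Tf norm_qn)

lemma E4_eval: "\<tau> \<in> UHP \<Longrightarrow> E4 \<tau> = eval_fps Bf (qn \<tau>)"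
  unfolding E4_def eval_Tf[OF norm_qn] Bf_def
  by (subst eval_fps_add) (auto intro!: R1_lt R1_mult R1_numeral R1_Tf norm_qn simp: eval_num_mult R1_Tf norm_qn)

lemma E6_eval: "\<tau> \<in> UHP \<Longrightarrow> E6 \<tau> = eval_fps Cf (qn \<tau>)"
  unfolding E6_def eval_Tf[OF norm_qn] Cf_def
  by (subst eval_fps_diff) (auto intro!: R1_lt R1_mult R1_numeral R1_Tf norm_qn simp: eval_num_mult R1_Tf norm_qn)

definition HD :: "(complex \<Rightarrow> complex) \<Rightarrow> (complex \<Rightarrow> complex) \<Rightarrow> bool" where
  "HD f g \<longleftrightarrow> (\<forall>\<tau>\<in>UHP. (f has_field_derivative (2 * pi * \<i>) * g \<tau>) (at \<tau>))"

lemma open_UHP: "open UHP"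
  unfolding UHP_def using open_halfspace_Im_gt[of 0] by simp

lemma qn_deriv: "(qn has_field_derivative (2 * pi * \<i>) * qn \<tau>) (at \<tau>)"
  unfolding qn_def by (auto intro!: derivative_eq_intros)

lemma HD_fps:
  assumes "R1 F" and eq: "\<And>\<tau>. \<tau> \<in> UHP \<Longrightarrow> f \<tau> = eval_fps F (qn \<tau>)"
  shows "HD f (\<lambda>\<tau>. eval_fps (Dop F) (qn \<tau>))"
  unfolding HD_def
proof
  fix \<tau> assume \<tau>: "\<tau> \<in> UHP"
  have q: "norm (qn \<tau>) < 1" using norm_qn[OF \<tau>] .
  have d1: "(eval_fps F has_field_derivative eval_fps (fps_deriv F) (qn \<tau>)) (at (qn \<tau>))"
    by (rule has_field_derivative_eval_fps[OF R1_lt[OF assms(1) q]])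
  have "((\<lambda>\<tau>. eval_fps F (qn \<tau>)) has_field_derivative eval_fps (fps_deriv F) (qn \<tau>) * ((2 * pi * \<i>) * qn \<tau>)) (at \<tau>)"
    by (rule DERIV_chain2[OF d1 qn_deriv])
  moreover have "eval_fps (Dop F) (qn \<tau>) = qn \<tau> * eval_fps (fps_deriv F) (qn \<tau>)"
    unfolding Dop_def using q assms(1)
    by (subst eval_fps_mult) (auto intro!: R1_lt R1_X R1_deriv)
  ultimately have "((\<lambda>\<tau>. eval_fps F (qn \<tau>)) has_field_derivative (2 * pi * \<i>) * eval_fps (Dop F) (qn \<tau>)) (at \<tau>)"
    by (simp add: algebra_simps)
  then show "(f has_field_derivative (2 * pi * \<i>) * eval_fps (Dop F) (qn \<tau>)) (at \<tau>)"
    by (rule has_field_derivative_transform_within_open[OF _ open_UHP \<tau>]) (simp add: eq)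
qed


lemma HD_Dq: "HD f g \<Longrightarrow> \<tau> \<in> UHP \<Longrightarrow> Dq f \<tau> = g \<tau>"
  unfolding HD_def Dq_def by (auto dest!: DERIV_imp_deriv)

lemma HD_cong: "HD f g \<Longrightarrow> (\<And>\<tau>. \<tau> \<in> UHP \<Longrightarrow> g \<tau> = g' \<tau>) \<Longrightarrow> HD f g'"
  unfolding HD_def by auto

lemma HD_congf: "HD f g \<Longrightarrow> (\<And>\<tau>. \<tau> \<in> UHP \<Longrightarrow> f \<tau> = f' \<tau>) \<Longrightarrow> HD f' g"
  unfolding HD_def
  by (auto intro: has_field_derivative_transform_within_open[OF _ open_UHP])

lemma HD_add: "HD f g \<Longrightarrow> HD h k \<Longrightarrow> HD (\<lambda>\<tau>. f \<tau> + h \<tau>) (\<lambda>\<tau>. g \<tau> + k \<tau>)"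
  unfolding HD_def by (auto intro!: derivative_eq_intros simp: algebra_simps)
lemma HD_diff: "HD f g \<Longrightarrow> HD h k \<Longrightarrow> HD (\<lambda>\<tau>. f \<tau> - h \<tau>) (\<lambda>\<tau>. g \<tau> - k \<tau>)"
  unfolding HD_def by (auto intro!: derivative_eq_intros simp: algebra_simps)
lemma HD_mult: "HD f g \<Longrightarrow> HD h k \<Longrightarrow> HD (\<lambda>\<tau>. f \<tau> * h \<tau>) (\<lambda>\<tau>. g \<tau> * h \<tau> + f \<tau> * k \<tau>)"
  unfolding HD_def by (auto intro!: derivative_eq_intros simp: algebra_simps)
lemma HD_const: "HD (\<lambda>\<tau>. c) (\<lambda>\<tau>. 0)"
  unfolding HD_def by (auto intro!: derivative_eq_intros)
lemma HD_divc: assumes "HD f g" shows "HD (\<lambda>\<tau>. f \<tau> / c) (\<lambda>\<tau>. g \<tau> / c)"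
proof (cases "c = 0")
  case True then show ?thesis using HD_const[of 0] by simp
next
  case False
  then show ?thesis using assms unfolding HD_def by (auto intro!: derivative_eq_intros simp: algebra_simps)
qed

lemma solve_c: "(c::complex) \<noteq> 0 \<Longrightarrow> c * x = y \<Longrightarrow> x = y / c"
  by (simp add: field_simps)
lemma HD_pow: "HD f g \<Longrightarrow> HD (\<lambda>\<tau>. f \<tau> ^ n) (\<lambda>\<tau>. of_nat n * f \<tau> ^ (n - 1) * g \<tau>)"
  unfolding HD_def by (auto intro!: derivative_eq_intros simp: algebra_simps)

lemma HD_holo: "HD f g \<Longrightarrow> f holomorphic_on UHP"
  unfolding HD_def holomorphic_on_def field_differentiable_def
  by (meson has_field_derivative_at_within)

lemma HD_of_holo: "f holomorphic_on UHP \<Longrightarrow> HD f (Dq f)"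
  unfolding HD_def Dq_def
proof
  fix \<tau> assume "f holomorphic_on UHP" "\<tau> \<in> UHP"
  then have "(f has_field_derivative deriv f \<tau>) (at \<tau>)"
    using holomorphic_derivI open_UHP by blast
  then show "(f has_field_derivative 2 * pi * \<i> * (deriv f \<tau> / (2 * pi * \<i>))) (at \<tau>)"
    by simp
qed

lemma Dq_holo: "f holomorphic_on UHP \<Longrightarrow> Dq f holomorphic_on UHP"
  unfolding Dq_def[abs_def]
  by (intro holomorphic_intros holomorphic_deriv open_UHP) auto

lemma eval_mult_R1: "R1 F \<Longrightarrow> R1 G \<Longrightarrow> norm z < 1 \<Longrightarrow> eval_fps (F * G) z = eval_fps F z * eval_fps G z"
  by (rule eval_fps_mult) (auto intro: R1_lt)

lemma HD_E2: "HD E2 (\<lambda>\<tau>. (E2 \<tau> ^ 2 - E4 \<tau>) / 12)"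
proof (rule HD_cong[OF HD_fps[OF R1_ABC(1) E2_eval]])
  fix \<tau> assume \<tau>: "\<tau> \<in> UHP"
  have q: "norm (qn \<tau>) < 1" using norm_qn[OF \<tau>] .
  have "12 * eval_fps (Dop Af) (qn \<tau>) = eval_fps (12 * Dop Af) (qn \<tau>)"
    using q by (simp add: eval_num_mult R1_Dop R1_ABC)
  also have "\<dots> = eval_fps Af (qn \<tau>) ^ 2 - eval_fps Bf (qn \<tau>)"
    unfolding F1 using q
    by (subst eval_fps_diff) (auto intro!: R1_lt R1_mult R1_ABC simp: power2_eq_square eval_mult_R1 R1_ABC)
  finally have h: "12 * eval_fps (Dop Af) (qn \<tau>) = eval_fps Af (qn \<tau>) ^ 2 - eval_fps Bf (qn \<tau>)" .
  have "eval_fps (Dop Af) (qn \<tau>) = (eval_fps Af (qn \<tau>) ^ 2 - eval_fps Bf (qn \<tau>)) / 12" by (rule solve_c[OF _ h]) simp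
  then show "eval_fps (Dop Af) (qn \<tau>) = (E2 \<tau> ^ 2 - E4 \<tau>) / 12"
    using \<tau> by (simp add: E2_eval E4_eval E6_eval)
qed

lemma HD_E4: "HD E4 (\<lambda>\<tau>. (E2 \<tau> * E4 \<tau> - E6 \<tau>) / 3)"
proof (rule HD_cong[OF HD_fps[OF R1_ABC(2) E4_eval]])
  fix \<tau> assume \<tau>: "\<tau> \<in> UHP"
  have q: "norm (qn \<tau>) < 1" using norm_qn[OF \<tau>] .
  have "3 * eval_fps (Dop Bf) (qn \<tau>) = eval_fps (3 * Dop Bf) (qn \<tau>)"
    using q by (simp add: eval_num_mult R1_Dop R1_ABC)
  also have "\<dots> = eval_fps Af (qn \<tau>) * eval_fps Bf (qn \<tau>) - eval_fps Cf (qn \<tau>)"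
    unfolding F2 using q
    by (subst eval_fps_diff) (auto intro!: R1_lt R1_mult R1_ABC simp: eval_mult_R1 R1_ABC)
  finally have h: "3 * eval_fps (Dop Bf) (qn \<tau>) = eval_fps Af (qn \<tau>) * eval_fps Bf (qn \<tau>) - eval_fps Cf (qn \<tau>)" .
  have "eval_fps (Dop Bf) (qn \<tau>) = (eval_fps Af (qn \<tau>) * eval_fps Bf (qn \<tau>) - eval_fps Cf (qn \<tau>)) / 3" by (rule solve_c[OF _ h]) simp
  then show "eval_fps (Dop Bf) (qn \<tau>) = (E2 \<tau> * E4 \<tau> - E6 \<tau>) / 3"
    using \<tau> by (simp add: E2_eval E4_eval E6_eval)
qed

lemma HD_E6: "HD E6 (\<lambda>\<tau>. (E2 \<tau> * E6 \<tau> - E4 \<tau> ^ 2) / 2)"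
proof (rule HD_cong[OF HD_fps[OF R1_ABC(3) E6_eval]])
  fix \<tau> assume \<tau>: "\<tau> \<in> UHP"
  have q: "norm (qn \<tau>) < 1" using norm_qn[OF \<tau>] .
  have "2 * eval_fps (Dop Cf) (qn \<tau>) = eval_fps (2 * Dop Cf) (qn \<tau>)"
    using q by (simp add: eval_num_mult R1_Dop R1_ABC)
  also have "\<dots> = eval_fps Af (qn \<tau>) * eval_fps Cf (qn \<tau>) - eval_fps Bf (qn \<tau>) ^ 2"
    unfolding F3 using q
    by (subst eval_fps_diff) (auto intro!: R1_lt R1_mult R1_ABC simp: power2_eq_square eval_mult_R1 R1_ABC)
  finally have h: "2 * eval_fps (Dop Cf) (qn \<tau>) = eval_fps Af (qn \<tau>) * eval_fps Cf (qn \<tau>) - eval_fps Bf (qn \<tau>) ^ 2" .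
  have "eval_fps (Dop Cf) (qn \<tau>) = (eval_fps Af (qn \<tau>) * eval_fps Cf (qn \<tau>) - eval_fps Bf (qn \<tau>) ^ 2) / 2" by (rule solve_c[OF _ h]) simp
  then show "eval_fps (Dop Cf) (qn \<tau>) = (E2 \<tau> * E6 \<tau> - E4 \<tau> ^ 2) / 2"
    using \<tau> by (simp add: E2_eval E4_eval E6_eval)
qed

lemma E4_nonzero: "\<exists>\<tau>\<in>UHP. E4 \<tau> \<noteq> 0"
proof -
  have "isCont (eval_fps Bf) 0"
    by (rule continuous_eval_fps) (use R1_lt[OF R1_ABC(2), of 0] in simp)
  moreover have "eval_fps Bf 0 \<noteq> 0" by (simp add: eval_fps_at_0 Bf_def)
  ultimately obtain \<delta> where \<delta>: "\<delta> > 0" "\<And>q. dist 0 q < \<delta> \<Longrightarrow> eval_fps Bf q \<noteq> 0"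
    using continuous_at_avoid by blast
  define t where "t = (\<bar>ln \<delta>\<bar> + 1) / (2 * pi)"
  have t: "t > 0" unfolding t_def by (simp add: pi_gt_zero add_pos_nonneg)
  define \<tau> where "\<tau> = \<i> * of_real t"
  have U: "\<tau> \<in> UHP" using t by (simp add: \<tau>_def UHP_def)
  have e1: "2 * pi * \<i> * \<tau> = of_real (- (2 * pi * t))" by (simp add: \<tau>_def)
  have e2: "2 * pi * t = \<bar>ln \<delta>\<bar> + 1" by (simp add: t_def)
  have "qn \<tau> = of_real (exp (- (\<bar>ln \<delta>\<bar> + 1)))"
    unfolding qn_def e1 e2 exp_of_real ..
  moreover have "exp (- (\<bar>ln \<delta>\<bar> + 1)) < \<delta>"
  proof -
    have "- (\<bar>ln \<delta>\<bar> + 1) < ln \<delta>" by linarith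
    then have "exp (- (\<bar>ln \<delta>\<bar> + 1)) < exp (ln \<delta>)" by simp
    then show ?thesis using \<delta> by simp
  qed
  ultimately have "dist 0 (qn \<tau>) < \<delta>" by simp
  then have "E4 \<tau> \<noteq> 0" using \<delta>(2) E4_eval[OF U] by simp
  then show ?thesis using U by blast
qed

lemma zero_product:
  assumes hb: "b holomorphic_on UHP" and hX: "X holomorphic_on UHP"
    and nz: "\<tau>0 \<in> UHP" "b \<tau>0 \<noteq> 0"
    and prod: "\<And>\<tau>. \<tau> \<in> UHP \<Longrightarrow> b \<tau> * X \<tau> = 0"
    and \<tau>: "\<tau> \<in> UHP"
  shows "X \<tau> = 0"
proof (rule ccontr)
  assume X: "X \<tau> \<noteq> 0"
  have "isCont X \<tau>"
    using hX open_UHP \<tau> holomorphic_on_imp_continuous_on continuous_on_eq_continuous_at by blast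
  then obtain e1 where e1: "e1 > 0" "\<And>y. dist \<tau> y < e1 \<Longrightarrow> X y \<noteq> 0"
    using continuous_at_avoid X by blast
  obtain e2 where e2: "e2 > 0" "ball \<tau> e2 \<subseteq> UHP" using open_UHP \<tau> open_contains_ball by blast
  define e where "e = min e1 e2"
  have e: "e > 0" "ball \<tau> e \<subseteq> UHP" using e1 e2 by (auto simp: e_def)
  have b0: "\<And>z. z \<in> ball \<tau> e \<Longrightarrow> b z = 0"
  proof -
    fix z assume z: "z \<in> ball \<tau> e"
    then have "X z \<noteq> 0" using e1 by (auto simp: e_def)
    moreover have "z \<in> UHP" using e(2) z by blast
    then have "b z * X z = 0" by (rule prod)
    ultimately show "b z = 0" by simp
  qed
  have conn: "connected UHP" unfolding UHP_def using convex_connected convex_halfspace_Im_gt by blast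
  have "b \<tau>0 = 0"
    by (rule analytic_continuation[OF hb open_UHP conn e(2) \<tau> _ b0 nz(1)])
       (use e in \<open>auto simp: islimpt_ball\<close>)
  then show False using nz by simp
qed


theorem mainTheorem6:
  fixes k :: real and Gk Gkm6 :: "complex \<Rightarrow> complex"
  assumes "\<exists>n::nat. k = real n / 2"
    and "solves_eq k Gk"
    and "solves_eq (k - 6) Gkm6"
  shows "solves_eq (k + 6) (\<lambda>\<tau>. E6 \<tau> * Gk \<tau> + Delta \<tau> * Gkm6 \<tau>) \<longleftrightarrow>
         (\<forall>\<tau>\<in>UHP. RC_E4 k Gk \<tau> = of_real (2 / 3 * (k + 1)) * Delta \<tau> * Gkm6 \<tau>)"
proof -
  define A where "A \<tau> = (E2 \<tau> ^ 2 - E4 \<tau>) / 12" for \<tau>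
  have hG: "Gk holomorphic_on UHP" and odeG: "\<And>\<tau>. \<tau> \<in> UHP \<Longrightarrow> Dq (Dq Gk) \<tau> - of_real ((k + 1) / 6) * E2 \<tau> * Dq Gk \<tau>
                 + of_real (k * (k + 1) / 12) * Dq E2 \<tau> * Gk \<tau> = 0"
    using assms(2) unfolding solves_eq_def by auto
  have hH: "Gkm6 holomorphic_on UHP" and odeH: "\<And>\<tau>. \<tau> \<in> UHP \<Longrightarrow> Dq (Dq Gkm6) \<tau> - of_real ((k - 6 + 1) / 6) * E2 \<tau> * Dq Gkm6 \<tau>
                 + of_real ((k - 6) * (k - 6 + 1) / 12) * Dq E2 \<tau> * Gkm6 \<tau> = 0"
    using assms(3) unfolding solves_eq_def by auto
  have DE2: "\<And>\<tau>. \<tau> \<in> UHP \<Longrightarrow> Dq E2 \<tau> = A \<tau>" using HD_Dq[OF HD_E2] by (simp add: A_def)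
  have DE4: "\<And>\<tau>. \<tau> \<in> UHP \<Longrightarrow> Dq E4 \<tau> = (E2 \<tau> * E4 \<tau> - E6 \<tau>) / 3" using HD_Dq[OF HD_E4] by simp
  have HG: "HD Gk (Dq Gk)" by (rule HD_of_holo[OF hG])
  have HH: "HD Gkm6 (Dq Gkm6)" by (rule HD_of_holo[OF hH])
  have HG1: "HD (Dq Gk) (\<lambda>\<tau>. of_real ((k + 1) / 6) * E2 \<tau> * Dq Gk \<tau> - of_real (k * (k + 1) / 12) * ((E2 \<tau> ^ 2 - E4 \<tau>) / 12) * Gk \<tau>)"
  proof (rule HD_cong[OF HD_of_holo[OF Dq_holo[OF hG]]])
    fix \<tau> assume "\<tau> \<in> UHP"
    then show "Dq (Dq Gk) \<tau> = of_real ((k + 1) / 6) * E2 \<tau> * Dq Gk \<tau> - of_real (k * (k + 1) / 12) * ((E2 \<tau> ^ 2 - E4 \<tau>) / 12) * Gk \<tau>"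
      using odeG[of \<tau>] DE2[of \<tau>] by (simp add: A_def algebra_simps)
  qed
  have HH1: "HD (Dq Gkm6) (\<lambda>\<tau>. of_real ((k - 6 + 1) / 6) * E2 \<tau> * Dq Gkm6 \<tau> - of_real ((k - 6) * (k - 6 + 1) / 12) * ((E2 \<tau> ^ 2 - E4 \<tau>) / 12) * Gkm6 \<tau>)"
  proof (rule HD_cong[OF HD_of_holo[OF Dq_holo[OF hH]]])
    fix \<tau> assume "\<tau> \<in> UHP"
    then show "Dq (Dq Gkm6) \<tau> = of_real ((k - 6 + 1) / 6) * E2 \<tau> * Dq Gkm6 \<tau> - of_real ((k - 6) * (k - 6 + 1) / 12) * ((E2 \<tau> ^ 2 - E4 \<tau>) / 12) * Gkm6 \<tau>"
      using odeH[of \<tau>] DE2[of \<tau>] by (simp add: A_def algebra_simps)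
  qed
  have HDelta: "HD Delta (\<lambda>\<tau>. E2 \<tau> * Delta \<tau>)"
  proof -
    have "HD (\<lambda>\<tau>. (E4 \<tau> ^ 3 - E6 \<tau> ^ 2) / 1728)
       (\<lambda>\<tau>. (of_nat 3 * E4 \<tau> ^ (3 - 1) * ((E2 \<tau> * E4 \<tau> - E6 \<tau>) / 3) - of_nat 2 * E6 \<tau> ^ (2 - 1) * ((E2 \<tau> * E6 \<tau> - E4 \<tau> ^ 2) / 2)) / 1728)"
      by (intro HD_divc HD_diff HD_pow HD_E4 HD_E6)
    then show ?thesis
      by (rule HD_cong[OF HD_congf]) (simp_all add: Delta_def[abs_def] field_simps eval_nat_numeral)
  qed
  define f where "f \<tau> = E6 \<tau> * Gk \<tau> + Delta \<tau> * Gkm6 \<tau>" for \<tau>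
  define f1 where "f1 \<tau> = (E2 \<tau> * E6 \<tau> - E4 \<tau> ^ 2) / 2 * Gk \<tau> + E6 \<tau> * Dq Gk \<tau> + E2 \<tau> * Delta \<tau> * Gkm6 \<tau> + Delta \<tau> * Dq Gkm6 \<tau>" for \<tau>
  have Hf: "HD f f1"
    unfolding f_def[abs_def] f1_def[abs_def]
    by (rule HD_cong[OF HD_add[OF HD_mult[OF HD_E6 HG] HD_mult[OF HDelta HH]]]) (simp add: algebra_simps)
  define X where "X \<tau> = RC_E4 k Gk \<tau> - of_real (2 / 3 * (k + 1)) * Delta \<tau> * Gkm6 \<tau>" for \<tau>
  define X' where "X' \<tau> = of_real k * Gk \<tau> * ((E2 \<tau> * E4 \<tau> - E6 \<tau>) / 3) - 4 * Dq Gk \<tau> * E4 \<tau> - of_real (2 / 3 * (k + 1)) * Delta \<tau> * Gkm6 \<tau>" for \<tau>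
  have XX: "\<And>\<tau>. \<tau> \<in> UHP \<Longrightarrow> X \<tau> = X' \<tau>"
    by (simp add: X_def X'_def RC_E4_def DE4)
  define R where "R \<tau> = E4 \<tau> / 4 * X' \<tau> + of_real ((k + 6 + 1) / 6) * E2 \<tau> * f1 \<tau> - of_real ((k + 6) * (k + 6 + 1) / 12) * A \<tau> * f \<tau>" for \<tau>
  have Hf1: "HD f1 R"
    unfolding f1_def[abs_def]
    apply (rule HD_cong)
     apply (rule HD_add HD_mult HD_divc HD_diff HD_pow HD_const HD_E2 HD_E4 HD_E6 HDelta HG HG1 HH HH1)+
    subgoal for \<tau>
      unfolding R_def X'_def f_def f1_def A_def
      by (simp add: field_simps eval_nat_numeral)
    done
  have Dqf: "\<And>\<tau>. \<tau> \<in> UHP \<Longrightarrow> Dq f \<tau> = f1 \<tau>" using HD_Dq[OF Hf] .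
  have HDqf: "HD (Dq f) R" by (rule HD_congf[OF Hf1]) (simp add: Dqf)
  have Dqqf: "\<And>\<tau>. \<tau> \<in> UHP \<Longrightarrow> Dq (Dq f) \<tau> = R \<tau>" using HD_Dq[OF HDqf] .
  have L: "\<And>\<tau>. \<tau> \<in> UHP \<Longrightarrow> Dq (Dq f) \<tau> - of_real ((k + 6 + 1) / 6) * E2 \<tau> * Dq f \<tau>
                 + of_real ((k + 6) * (k + 6 + 1) / 12) * Dq E2 \<tau> * f \<tau> = E4 \<tau> / 4 * X \<tau>"
    by (simp add: Dqqf Dqf DE2 XX R_def)
  have fholo: "f holomorphic_on UHP" by (rule HD_holo[OF Hf])
  have E4holo: "E4 holomorphic_on UHP" by (rule HD_holo[OF HD_E4])
  have Xholo: "X holomorphic_on UHP"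
    unfolding X_def[abs_def] RC_E4_def
    by (intro holomorphic_intros hG hH Dq_holo E4holo HD_holo[OF HDelta])
  obtain \<tau>0 where \<tau>0: "\<tau>0 \<in> UHP" "E4 \<tau>0 \<noteq> 0" using E4_nonzero by blast
  have "solves_eq (k + 6) f \<longleftrightarrow> (\<forall>\<tau>\<in>UHP. E4 \<tau> / 4 * X \<tau> = 0)"
  proof -
    have eqv: "(\<forall>\<tau>\<in>UHP. Dq (Dq f) \<tau> - of_real ((k + 6 + 1) / 6) * E2 \<tau> * Dq f \<tau>
                 + of_real ((k + 6) * (k + 6 + 1) / 12) * Dq E2 \<tau> * f \<tau> = 0) = (\<forall>\<tau>\<in>UHP. E4 \<tau> / 4 * X \<tau> = 0)"
      by (intro ball_cong refl) (simp only: L)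
    show ?thesis unfolding solves_eq_def by (simp only: eqv fholo simp_thms)
  qed
  also have "\<dots> \<longleftrightarrow> (\<forall>\<tau>\<in>UHP. X \<tau> = 0)"
  proof
    assume h: "\<forall>\<tau>\<in>UHP. E4 \<tau> / 4 * X \<tau> = 0"
    show "\<forall>\<tau>\<in>UHP. X \<tau> = 0"
    proof
      fix \<tau> assume "\<tau> \<in> UHP"
      show "X \<tau> = 0"
        by (rule zero_product[of "\<lambda>\<tau>. E4 \<tau> / 4" X \<tau>0]) (use h \<tau>0 \<open>\<tau> \<in> UHP\<close> Xholo E4holo in \<open>auto intro!: holomorphic_intros\<close>)
    qed
  qed simp
  also have "\<dots> \<longleftrightarrow> (\<forall>\<tau>\<in>UHP. RC_E4 k Gk \<tau> = of_real (2 / 3 * (k + 1)) * Delta \<tau> * Gkm6 \<tau>)"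
    by (simp add: X_def)
  finally show ?thesis unfolding f_def[abs_def] .
qed


end
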